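(* Let $K_\infty$ be the monoid given by the monoid presentation $\langle e,b\mid e^2=e,\ b^2=1\rangle$. For every $n\ge1$, the Zimin word $Z_n$ is an isoterm relative to $K_\infty$. That is, if $w$ is a word such that $K_\infty$ satisfies the identity $Z_n\approx w$, then $w=Z_n$ as words.
   Context: Let $x_1,x_2,\dots$ be letters. The Zimin words are defined inductively by $Z_1=x_1$ and $Z_{n+1}=Z_n\,x_{n+1}\,Z_n$. A word $v$ is an isoterm relative to a semigroup $S$ if the only word $v'$ such that $S$ satisfies the identity $v\approx v'$ is $v'=v$ itself. *)

theory Defs
  imports Main
begin

text \<open>Letters are natural numbers; a word is a list of letters.
  The Zimin word Z_n uses the letters 1..n (letter k standing for x_k).\<close>

fun zimin :: "nat \<Rightarrow> nat list" where
  "zimin 0 = []"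
| "zimin (Suc 0) = [1]"
| "zimin (Suc (Suc n)) = zimin (Suc n) @ [Suc (Suc n)] @ zimin (Suc n)"

definition satisfies_id :: "'a::monoid_mult itself \<Rightarrow> nat list \<Rightarrow> nat list \<Rightarrow> bool" where
  "satisfies_id _ u v \<longleftrightarrow>
     (\<forall>h :: nat \<Rightarrow> 'a. prod_list (map h u) = prod_list (map h v))"

definition isoterm :: "'a::monoid_mult itself \<Rightarrow> nat list \<Rightarrow> bool" where
  "isoterm M v \<longleftrightarrow> (\<forall>v'. satisfies_id M v v' \<longrightarrow> v' = v)"

datatype gen = E | B

inductive kcong :: "gen list \<Rightarrow> gen list \<Rightarrow> bool" where
  kc_E: "kcong (p @ [E, E] @ q) (p @ [E] @ q)"
| kc_B: "kcong (p @ [B, B] @ q) (p @ q)"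
| kc_refl: "kcong u u"
| kc_sym: "kcong u v \<Longrightarrow> kcong v u"
| kc_trans: "kcong u v \<Longrightarrow> kcong v w \<Longrightarrow> kcong u w"

lemma kcong_equivp: "equivp kcong"
  by (rule equivpI; auto simp: reflp_def symp_def transp_def intro: kcong.intros)

lemma kcong_context: "kcong u v \<Longrightarrow> kcong (p @ u @ q) (p @ v @ q)"
proof (induction arbitrary: p q rule: kcong.induct)
  case (kc_E p' q')
  then show ?case using kcong.kc_E[of "p @ p'" "q' @ q"] by simp
next
  case (kc_B p' q')
  then show ?case using kcong.kc_B[of "p @ p'" "q' @ q"] by simp
qed (auto intro: kcong.intros, metis kc_trans)

lemma kcong_append: "kcong a b \<Longrightarrow> kcong c d \<Longrightarrow> kcong (a @ c) (b @ d)"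
  using kcong_context[of a b "[]" c] kcong_context[of c d b "[]"]
  by (auto intro: kc_trans)

quotient_type kinf = "gen list" / kcong
  by (rule kcong_equivp)

instantiation kinf :: monoid_mult
begin

lift_definition one_kinf :: kinf is "[]" .

lift_definition times_kinf :: "kinf \<Rightarrow> kinf \<Rightarrow> kinf" is "(@)"
  by (rule kcong_append)

instance
  by standard (transfer; simp add: kc_refl)+

end

lift_definition kE :: kinf is "[E]" .
lift_definition kB :: kinf is "[B]" .

lemma "kE * kE = kE" by transfer (use kc_E[of "[]" "[]"] in simp)
lemma "kB * kB = 1" by transfer (use kc_B[of "[]" "[]"] in simp)

end

theory Submission
  imports Defs
begin

fun step :: "gen list \<Rightarrow> gen \<Rightarrow> gen list" where
  "step (E # r) E = E # r"
| "step (B # r) B = r"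
| "step r x = x # r"

fun alt :: "'a list \<Rightarrow> bool" where
  "alt (x # y # r) = (x \<noteq> y \<and> alt (y # r))"
| "alt _ = True"

lemma alt_tl: "alt (x # xs) \<Longrightarrow> alt xs"
  by (cases xs) auto

definition nf :: "gen list \<Rightarrow> gen list" where
  "nf u = foldl step [] u"

lemma alt_step: "alt r \<Longrightarrow> alt (step r x)"
  by (induction r x rule: step.induct) (auto elim: alt.elims)

lemma alt_foldl: "alt r \<Longrightarrow> alt (foldl step r u)"
  by (induction u arbitrary: r) (auto simp: alt_step)

lemma stepEE: "step (step r E) E = step r E"
  by (cases "(r,E)" rule: step.cases) auto

lemma stepBB: "alt r \<Longrightarrow> step (step r B) B = r"
proof (cases r)
  case (Cons x r')
  assume "alt r"
  then show ?thesis using Cons by (cases x; cases r'; auto; case_tac a; auto)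
qed simp

lemma kcong_nf: "kcong u v \<Longrightarrow> nf u = nf v"
proof (induction rule: kcong.induct)
  case (kc_E p q) then show ?case by (simp add: nf_def stepEE)
next
  case (kc_B p q)
  have "alt (foldl step [] p)" by (rule alt_foldl) simp
  then show ?case by (simp add: nf_def stepBB)
qed auto

lemma nf_of_alt: "(r = [] \<or> xs = [] \<or> hd r \<noteq> hd xs) \<Longrightarrow> alt xs \<Longrightarrow> foldl step r xs = rev xs @ r"
proof (induction xs arbitrary: r)
  case Nil then show ?case by simp
next
  case (Cons x xs)
  have sx: "step r x = x # r" using Cons.prems(1)
    by (cases "(r,x)" rule: step.cases) auto
  have ax: "alt xs" using Cons.prems(2) by (rule alt_tl)
  moreover have "xs = [] \<or> hd (x # r) \<noteq> hd xs" using Cons.prems(2) by (cases xs) auto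
  ultimately have "foldl step (x # r) xs = rev xs @ x # r"
    using Cons.IH by blast
  then show ?case using sx by simp
qed

lemma len_step: "length (step r x) \<le> Suc (length r)"
  by (cases "(r,x)" rule: step.cases) auto

lemma len_step2: "length (step (step r x) x) \<le> Suc (length r)"
  by (cases x; cases "(r,x)" rule: step.cases) (auto intro: order.trans[OF len_step])

lemma len_le: "length (foldl step r xs) \<le> length r + length xs"
proof (induction xs arbitrary: r)
  case (Cons x xs)
  show ?case using Cons.IH[of "step r x"] len_step[of r x] by simp
qed simp

lemma len_lt: "\<not> alt xs \<Longrightarrow> length (foldl step r xs) < length r + length xs"
proof (induction xs arbitrary: r)
  case Nil then show ?case by simp
next
  case (Cons x xs)
  show ?case
  proof (cases "alt xs")
    case False
    then show ?thesis using Cons.IH[of "step r x"] len_step[of r x] by simp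
  next
    case True
    then obtain xs' where xs: "xs = x # xs'" using Cons.prems by (cases xs) auto
    have "length (foldl step r (x # xs)) = length (foldl step (step (step r x) x) xs')"
      using xs by simp
    also have "\<dots> \<le> length (step (step r x) x) + length xs'" by (rule len_le)
    also have "\<dots> < length r + length (x # xs)" using len_step2[of r x] xs by simp
    finally show ?thesis .
  qed
qed

lemma nf_EB: "(r = [] \<or> hd r = B) \<Longrightarrow>
  foldl step r (concat (replicate k [E, B])) = concat (replicate k [B, E]) @ r"
proof (induction k arbitrary: r)
  case (Suc k)
  have "foldl step r [E, B] = B # E # r" using Suc.prems by (cases "(r,E)" rule: step.cases) auto
  moreover have "concat (replicate k [B, E]) @ [B, E] = [B, E] @ concat (replicate k [B, E])"
    by (metis concat.simps(2) concat_append concat.simps(1) append_Nil2 replicate_append_same)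
  ultimately show ?case using Suc.IH[of "B # E # r"] by simp
qed simp

lemma prod_abs: "prod_list (map (\<lambda>x. abs_kinf (g x)) u) = abs_kinf (concat (map g u))"
  by (induction u) (auto simp: one_kinf.abs_eq times_kinf.abs_eq)

lemma sat_nf: "satisfies_id TYPE(kinf) u v \<Longrightarrow> nf (concat (map g u)) = nf (concat (map g v))"
proof -
  assume "satisfies_id TYPE(kinf) u v"
  then have "prod_list (map (\<lambda>x. abs_kinf (g x)) u) = prod_list (map (\<lambda>x. abs_kinf (g x)) v)"
    unfolding satisfies_id_def by blast
  then show ?thesis by (simp add: prod_abs kinf.abs_eq_iff kcong_nf)
qed

definition Fw :: "nat \<Rightarrow> nat list \<Rightarrow> nat list" where
  "Fw a Y = a # concat (map (\<lambda>y. [y, a]) Y)"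

lemma Fw_Nil[simp]: "Fw a [] = [a]" by (simp add: Fw_def)
lemma Fw_Cons[simp]: "Fw a (y # Y) = a # y # Fw a Y" by (simp add: Fw_def)
lemma Fw_app: "Fw a (Y1 @ [c] @ Y2) = Fw a Y1 @ [c] @ Fw a Y2"
  by (induction Y1) auto

lemma zimin_Fw: "zimin (Suc n) = Fw 1 (map Suc (zimin n))"
proof (induction n)
  case 0 then show ?case by simp
next
  case (Suc n)
  show ?case
  proof (cases n)
    case 0 then show ?thesis by simp
  next
    case (Suc m)
    have "zimin (Suc (Suc (Suc m))) = zimin (Suc (Suc m)) @ [Suc (Suc (Suc m))] @ zimin (Suc (Suc m))"
      by simp
    also have "\<dots> = Fw 1 (map Suc (zimin (Suc m))) @ [Suc (Suc (Suc m))] @ Fw 1 (map Suc (zimin (Suc m)))"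
      using Suc.IH unfolding Suc by simp
    also have "\<dots> = Fw 1 (map Suc (zimin (Suc m)) @ [Suc (Suc (Suc m))] @ map Suc (zimin (Suc m)))"
      by (simp only: Fw_app)
    also have "\<dots> = Fw 1 (map Suc (zimin (Suc (Suc m))))"
      by (simp del: zimin.simps add: zimin.simps(3)[of m])
    finally show ?thesis unfolding Suc .
  qed
qed

lemma map_Fw: "map ((+) k) (Fw a Y) = Fw (k + a) (map ((+) k) Y)"
  by (induction Y) auto

lemma zimin_pos: "x \<in> set (zimin n) \<Longrightarrow> 1 \<le> x"
  by (induction n rule: zimin.induct) auto

lemma filter_Fw: "a \<notin> set Y \<Longrightarrow> filter (\<lambda>x. x \<noteq> a) (Fw a Y) = Y"
  by (induction Y) auto

lemma count_Fw: "a \<notin> set Y \<Longrightarrow> length (filter (\<lambda>x. x = a) (Fw a Y)) = Suc (length Y)"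
  by (induction Y) auto

lemma len_Fw: "length (Fw a Y) = Suc (2 * length Y)"
  by (induction Y) auto

lemma alt_Fw: "a \<notin> set Y \<Longrightarrow> alt (map (\<lambda>x. if x = a then B else E) (Fw a Y))"
  by (induction Y) (auto simp: Fw_def)

lemma imgB: "concat (map (\<lambda>x. if x = a then [E, B] else []) u)
   = concat (replicate (length (filter (\<lambda>x. x = a) u)) [E, B])"
  by (induction u) auto

lemma imgA: "concat (map (\<lambda>x. if x = a then [B] else [E]) u) = map (\<lambda>x. if x = a then B else E) u"
  by (induction u) auto

lemma alt_map_inj: "alt xs \<Longrightarrow> inj f \<Longrightarrow> alt (map f xs)"
  by (induction xs rule: alt.induct) (auto simp: inj_eq)


lemma count_alt: "alt (bs :: bool list) \<Longrightarrow>
  int (length (filter (\<lambda>b. b) bs)) - int (length (filter Not bs)) =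
  (if bs = [] then 0 else if hd bs \<and> last bs then 1 else if \<not> hd bs \<and> \<not> last bs then -1 else 0)"
proof (induction bs)
  case (Cons x bs)
  have IH: "int (length (filter (\<lambda>b. b) bs)) - int (length (filter Not bs)) =
  (if bs = [] then 0 else if hd bs \<and> last bs then 1 else if \<not> hd bs \<and> \<not> last bs then -1 else 0)"
    by (rule Cons.IH[OF alt_tl[OF Cons.prems]])
  show ?case
  proof (cases bs)
    case Nil then show ?thesis by simp
  next
    case (Cons y bs')
    then have "x \<noteq> y" using Cons.prems by simp
    have ne: "bs \<noteq> []" and h: "hd bs = y" and l: "last (x # bs) = last bs" using Cons by auto
    have "int (length (filter (\<lambda>b. b) (x # bs))) - int (length (filter Not (x # bs)))
      = (if x then 1 else -1) + (int (length (filter (\<lambda>b. b) bs)) - int (length (filter Not bs)))"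
      by simp
    also have "\<dots> = (if x then 1 else -1) + (if y \<and> last bs then 1 else if \<not> y \<and> \<not> last bs then -1 else 0)"
      using IH ne h by simp
    finally show ?thesis using \<open>x \<noteq> y\<close> l by (cases x; cases y; cases "last bs") auto
  qed
qed simp

lemma F_alt: "alt (map (\<lambda>x. x = a) w) \<Longrightarrow> w \<noteq> [] \<Longrightarrow> hd w = a \<Longrightarrow> last w = a
  \<Longrightarrow> w = Fw a (filter (\<lambda>x. x \<noteq> a) w)"
proof (induction "length w" arbitrary: w rule: less_induct)
  case less
  obtain w' where w: "w = a # w'" using less.prems by (cases w) auto
  show ?case
  proof (cases w')
    case Nil then show ?thesis using w by simp
  next
    case (Cons y w'')
    have ya: "y \<noteq> a" using less.prems(1) w Cons by simp
    have ne: "w'' \<noteq> []" using less.prems(4) w Cons ya by auto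
    have alt'': "alt (map (\<lambda>x. x = a) w'')"
      using less.prems(1) w Cons by (auto intro: alt_tl)
    have hd'': "hd w'' = a" using less.prems(1) w Cons ya ne by (cases w'') auto
    have last'': "last w'' = a" using less.prems(4) w Cons ne by simp
    have lt: "length w'' < length w" using w Cons by simp
    have IH: "w'' = Fw a (filter (\<lambda>x. x \<noteq> a) w'')"
      by (rule less.hyps[OF lt alt'' ne hd'' last''])
    have f: "filter (\<lambda>x. x \<noteq> a) w = y # filter (\<lambda>x. x \<noteq> a) w''"
      using w Cons ya by simp
    have "w = a # y # w''" using w Cons by simp
    also have "\<dots> = Fw a (y # filter (\<lambda>x. x \<noteq> a) w'')" using IH by simp
    finally show ?thesis unfolding f .
  qed
qed

lemma step_main:
  assumes aY: "a \<notin> set Y" and sat: "satisfies_id TYPE(kinf) (Fw a Y) w"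
    and fil: "filter (\<lambda>x. x \<noteq> a) w = Y"
  shows "w = Fw a Y"
proof -
  let ?m = "length Y"
  let ?c = "\<lambda>u. length (filter (\<lambda>x. x = a) u)"
  have "nf (concat (replicate (?c (Fw a Y)) [E, B])) = nf (concat (replicate (?c w) [E, B]))"
    using sat_nf[OF sat, of "\<lambda>x. if x = a then [E, B] else []"] by (simp only: imgB)
  then have "length (nf (concat (replicate (?c (Fw a Y)) [E, B]))) = length (nf (concat (replicate (?c w) [E, B])))"
    by simp
  then have cw: "?c w = Suc ?m"
    by (simp add: nf_def nf_EB count_Fw[OF aY] length_concat sum_list_replicate)
  let ?phi = "\<lambda>x. if x = a then B else E"
  have eqA: "nf (map ?phi (Fw a Y)) = nf (map ?phi w)"
    using sat_nf[OF sat, of "\<lambda>x. if x = a then [B] else [E]"] by (simp only: imgA)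
  have "length (nf (map ?phi (Fw a Y))) = Suc (2 * ?m)"
    using nf_of_alt[OF _ alt_Fw[OF aY], of "[]"] by (simp add: nf_def len_Fw)
  have lw: "length w = Suc (2 * ?m)"
    using sum_length_filter_compl[of "\<lambda>x. x = a" w] cw fil by simp
  have altw: "alt (map ?phi w)"
  proof (rule ccontr)
    assume "\<not> alt (map ?phi w)"
    then have "length (nf (map ?phi w)) < length w" using len_lt[of "map ?phi w" "[]"] by (simp add: nf_def)
    then show False using eqA \<open>length (nf (map ?phi (Fw a Y))) = Suc (2 * ?m)\<close> lw by simp
  qed
  define g where "g = (\<lambda>x. x = B)"
  have "inj g" unfolding g_def inj_def by (metis gen.exhaust gen.distinct)
  have eqg: "map (\<lambda>x. x = a) w = map g (map ?phi w)" by (simp add: g_def)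
  have altb: "alt (map (\<lambda>x. x = a) w)" unfolding eqg by (rule alt_map_inj[OF altw \<open>inj g\<close>])
  have c1: "length (filter (\<lambda>b. b) (map (\<lambda>x. x = a) w)) = Suc ?m" using cw
    by (simp add: filter_map comp_def)
  have c2: "length (filter Not (map (\<lambda>x. x = a) w)) = ?m" using fil
    by (simp add: filter_map comp_def)
  let ?bs = "map (\<lambda>x. x = a) w"
  have "(if ?bs = [] then 0 else if hd ?bs \<and> last ?bs then 1 else if \<not> hd ?bs \<and> \<not> last ?bs then -1 else 0) = (1::int)"
    using count_alt[OF altb] c1 c2 by simp
  then have bsp: "?bs \<noteq> [] \<and> hd ?bs \<and> last ?bs"
    by (metis one_neq_zero zero_neq_neg_one one_neq_neg_one)
  have wne: "w \<noteq> []" using bsp by simp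
  have "w \<noteq> [] \<and> hd w = a \<and> last w = a"
    using bsp wne by (simp add: hd_map last_map)
  then show ?thesis using F_alt[OF altb] fil by auto
qed

lemma prod_filter: "prod_list (map (h(a := 1)) u) = prod_list (map h (filter (\<lambda>x. x \<noteq> a) u))"
  by (induction u) auto

lemma sat_filter: "satisfies_id TYPE(kinf) u v \<Longrightarrow>
  satisfies_id TYPE(kinf) (filter (\<lambda>x. x \<noteq> a) u) (filter (\<lambda>x. x \<noteq> a) v)"
  unfolding satisfies_id_def
  by (metis prod_filter)

lemma sat_nil: "satisfies_id TYPE(kinf) [] (w :: nat list) \<Longrightarrow> w = []"
proof -
  assume "satisfies_id TYPE(kinf) [] w"
  have "nf (concat (map (\<lambda>x. [E, B]) ([] :: nat list))) = nf (concat (map (\<lambda>x. [E, B]) w))"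
    by (rule sat_nf[OF \<open>satisfies_id TYPE(kinf) [] w\<close>])
  moreover have "concat (map (\<lambda>x. [E, B]) w) = concat (replicate (length w) [E, B])"
    by (induction w) auto
  ultimately show ?thesis
    using nf_EB[of "[]" "length w"] by (simp add: nf_def)
qed

lemma plusSuc: "(\<lambda>x. Suc (k + x)) = (+) (Suc k)" by auto
lemma map_plus0: "map ((+) (0::nat)) xs = xs" by (induction xs) auto

lemma gen_main: "satisfies_id TYPE(kinf) (map ((+) k) (zimin n)) w \<Longrightarrow> w = map ((+) k) (zimin n)"
proof (induction n arbitrary: k w)
  case 0 then show ?case using sat_nil by simp
next
  case (Suc n)
  let ?Y = "map ((+) (Suc k)) (zimin n)"
  have Z: "map ((+) k) (zimin (Suc n)) = Fw (Suc k) ?Y"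
    by (simp add: zimin_Fw map_Fw comp_def plusSuc)
  have aY: "Suc k \<notin> set ?Y" using zimin_pos by fastforce
  have sat: "satisfies_id TYPE(kinf) (Fw (Suc k) ?Y) w" using Suc.prems Z by simp
  have "satisfies_id TYPE(kinf) ?Y (filter (\<lambda>x. x \<noteq> Suc k) w)"
    using sat_filter[OF sat, of "Suc k"] filter_Fw[OF aY] by simp
  then have "filter (\<lambda>x. x \<noteq> Suc k) w = ?Y" using Suc.IH by blast
  then show ?case using step_main[OF aY sat] Z by simp
qed

theorem mainTheorem4:
  fixes n :: nat and w :: "nat list"
  assumes "n \<ge> 1"
    and "satisfies_id TYPE(kinf) (zimin n) w"
  shows "w = zimin n"
  using gen_main[of 0 n w] assms by (simp add: map_plus0)

end
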